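(* Let $K\ge 2$, $T\ge 1$, and let $\mathbf{x}(t)\in[0,1]^K$, $t=1,\dots,T$, be any fixed sequence of reward vectors. Run the algorithm REX3 described in the context with transfer function $\psi$ equal to the identity and parameter $\gamma\in(0,\tfrac12)$. Provided that $\mathbb{E}\mathbb{G}_{alg}\le\mathbb{G}_{max}$ and $\mathbb{E}\mathbb{G}_{unif}\ge\mathbb{G}_{min}$, $$\mathbb{G}_{max}-\mathbb{E}\mathbb{G}_{alg}\le\frac{K\ln K}{\gamma}+\gamma\big(e\,\mathbb{G}_{max}-(4-e)\,\mathbb{G}_{min}\big).$$
   Context: Adversarial utility-based dueling bandit setting: there are $K$ arms; before play, an (oblivious) environment fixes a horizon $T$ and reward vectors $\mathbf{x}(t)=(x_1(t),\dots,x_K(t))\in[0,1]^K$ for $t=1,\dots,T$. At each round the learner selects a pair of arms $(a_t,b_t)$ and observes only the relative feedback $\psi(x_{a_t}(t)-x_{b_t}(t))$, here with $\psi(z)=z$. Algorithm REX3 with parameter $\gamma$: initialize $w_i(1)=1$ for all $i$. At each round $t$: set $p_i(t)=(1-\gamma)\frac{w_i(t)}{\sum_{j=1}^K w_j(t)}+\frac{\gamma}{K}$; draw two arms $a_t,b_t$ independently according to $\mathbf{p}(t)=(p_1(t),\dots,p_K(t))$; receive $\psi(x_{a_t}(t)-x_{b_t}(t))$; if $a_t\neq b_t$, set $w_{a_t}(t+1)=w_{a_t}(t)\exp\!\big(\frac{\gamma}{K}\frac{\psi(x_{a_t}-x_{b_t})}{2p_{a_t}(t)}\big)$ and $w_{b_t}(t+1)=w_{b_t}(t)\exp\!\big(-\frac{\gamma}{K}\frac{\psi(x_{a_t}-x_{b_t})}{2p_{b_t}(t)}\big)$;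 other weights unchanged. Notation: $\mathbb{G}_{max}=\max_i\sum_{t=1}^T x_i(t)$; $\mathbb{G}_{min}=\min_i\sum_{t=1}^T x_i(t)$; $\mathbb{G}_{alg}=\frac12\sum_{t=1}^T\big(x_{a_t}(t)+x_{b_t}(t)\big)$; $\mathbb{E}\mathbb{G}_{unif}=\frac1K\sum_{t=1}^T\sum_{i=1}^K x_i(t)$. Expectations are over the algorithm's internal randomization. *)

theory Defs
  imports "HOL-Probability.Probability"
begin

text \<open>Arms are 0,...,K-1; rounds are 1,...,T; reward of arm i at round t is x t i.
  Weights are functions nat => real (only indices below K matter).\<close>

definition rex3_prob :: "real \<Rightarrow> nat \<Rightarrow> (nat \<Rightarrow> real) \<Rightarrow> nat \<Rightarrow> real" where
  "rex3_prob \<gamma> K w i = (1 - \<gamma>) * w i / (\<Sum>j<K. w j) + \<gamma> / real K"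

definition rex3_arm :: "real \<Rightarrow> nat \<Rightarrow> (nat \<Rightarrow> real) \<Rightarrow> nat pmf" where
  "rex3_arm \<gamma> K w = embed_pmf (\<lambda>i. if i < K then rex3_prob \<gamma> K w i else 0)"

definition rex3_update ::
  "(real \<Rightarrow> real) \<Rightarrow> real \<Rightarrow> nat \<Rightarrow> (nat \<Rightarrow> nat \<Rightarrow> real) \<Rightarrow> nat \<Rightarrow> (nat \<Rightarrow> real)
     \<Rightarrow> nat \<Rightarrow> nat \<Rightarrow> (nat \<Rightarrow> real)" where
  "rex3_update \<psi> \<gamma> K x t w a b =
     (if a = b then w
      else (let fb = \<psi> (x t a - x t b) in
            w(a := w a * exp (\<gamma> / real K * fb / (2 * rex3_prob \<gamma> K w a)),
              b := w b * exp (- (\<gamma> / real K * fb / (2 * rex3_prob \<gamma> K w b))))))"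

text \<open>Joint distribution, after t rounds, of (weights w(t+1), cumulative gain of the
  algorithm  sum_{s<=t} (x_{a_s}(s) + x_{b_s}(s))/2).\<close>
fun rex3_run ::
  "(real \<Rightarrow> real) \<Rightarrow> real \<Rightarrow> nat \<Rightarrow> (nat \<Rightarrow> nat \<Rightarrow> real) \<Rightarrow> nat \<Rightarrow> ((nat \<Rightarrow> real) \<times> real) pmf" where
  "rex3_run \<psi> \<gamma> K x 0 = return_pmf (\<lambda>_. 1, 0)"
| "rex3_run \<psi> \<gamma> K x (Suc t) =
     bind_pmf (rex3_run \<psi> \<gamma> K x t) (\<lambda>(w, g).
     bind_pmf (rex3_arm \<gamma> K w) (\<lambda>a.
     bind_pmf (rex3_arm \<gamma> K w) (\<lambda>b.
     return_pmf (rex3_update \<psi> \<gamma> K x (Suc t) w a b,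
                 g + (x (Suc t) a + x (Suc t) b) / 2))))"

definition EG_alg :: "(real \<Rightarrow> real) \<Rightarrow> real \<Rightarrow> nat \<Rightarrow> (nat \<Rightarrow> nat \<Rightarrow> real) \<Rightarrow> nat \<Rightarrow> real" where
  "EG_alg \<psi> \<gamma> K x T = measure_pmf.expectation (rex3_run \<psi> \<gamma> K x T) snd"

definition G_max :: "nat \<Rightarrow> (nat \<Rightarrow> nat \<Rightarrow> real) \<Rightarrow> nat \<Rightarrow> real" where
  "G_max K x T = Max ((\<lambda>i. \<Sum>t=1..T. x t i) ` {..<K})"

definition G_min :: "nat \<Rightarrow> (nat \<Rightarrow> nat \<Rightarrow> real) \<Rightarrow> nat \<Rightarrow> real" where
  "G_min K x T = Min ((\<lambda>i. \<Sum>t=1..T. x t i) ` {..<K})"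

definition EG_unif :: "nat \<Rightarrow> (nat \<Rightarrow> nat \<Rightarrow> real) \<Rightarrow> nat \<Rightarrow> real" where
  "EG_unif K x T = (1 / real K) * (\<Sum>t=1..T. \<Sum>i<K. x t i)"

end

theory Submission imports Defs begin

lemma exp_quad_bound:
  fixes z :: real assumes "-1/2 \<le> z" "z \<le> 1"
  shows "exp z \<le> 1 + z + z^2"
proof (cases "0 \<le> z")
  case True thus ?thesis using exp_bound assms by auto
next
  case False
  define y where "y = -z"
  have y: "0 \<le> y" "y \<le> 1/2" using False assms y_def by auto
  have e: "1 + y + y^2/2 \<le> exp y" using exp_lower_Taylor_quadratic y by auto
  have "0 \<le> y^2" by simp
  hence pos: "0 < 1 - y + y^2" using y by linarith
  have eq: "(1 - y + y^2) * (1 + y + y^2/2) = 1 + y^2/2 + y^3/2 + y^4/2"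
    by (simp add: field_simps power2_eq_square power3_eq_cube power4_eq_xxxx)
  have "1 \<le> (1 - y + y^2) * (1 + y + y^2/2)"
    unfolding eq using y by (simp add: add_nonneg_nonneg)
  also have "\<dots> \<le> (1 - y + y^2) * exp y" using e pos by (intro mult_left_mono) auto
  finally have "1 \<le> (1 - y + y^2) * exp y" .
  hence "exp (-y) \<le> 1 - y + y^2"
    by (simp add: exp_minus field_simps)
  thus ?thesis using y_def by (simp add: power2_eq_square)
qed

definition ch :: "real \<Rightarrow> nat \<Rightarrow> (nat \<Rightarrow> nat \<Rightarrow> real) \<Rightarrow> nat \<Rightarrow> (nat \<Rightarrow> real) \<Rightarrow> nat \<Rightarrow> nat \<Rightarrow> nat \<Rightarrow> real" where
  "ch \<gamma> K x t w a b i = (if i = a then (x t a - x t b) / (2 * rex3_prob \<gamma> K w a) else 0)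
      - (if i = b then (x t a - x t b) / (2 * rex3_prob \<gamma> K w b) else 0)"

definition E2 :: "real \<Rightarrow> nat \<Rightarrow> (nat \<Rightarrow> real) \<Rightarrow> (nat \<Rightarrow> nat \<Rightarrow> real) \<Rightarrow> real" where
  "E2 \<gamma> K w f = (\<Sum>a<K. \<Sum>b<K. rex3_prob \<gamma> K w a * rex3_prob \<gamma> K w b * f a b)"

definition Psi :: "real \<Rightarrow> nat \<Rightarrow> nat \<Rightarrow> (nat \<Rightarrow> real) \<times> real \<Rightarrow> real" where
  "Psi \<gamma> K j s = ln (\<Sum>i<K. fst s i) - ln (fst s j) - (\<gamma> / real K + 3 * \<gamma>^2 / (2 * real K * (1 - \<gamma>))) * snd s"

lemma alg: "(K::real) \<noteq> 0 \<Longrightarrow> 1 - g \<noteq> 0 \<Longrightarrow> lS + g/K*(g*xb - g/K*X)/(1-g) + (g/K)^2/(1-g)*(X + K*xb)/2 - (lw + g/K*(xj - xb)) - (g/K + 3*g^2/(2*K*(1-g)))*(G + xb) = lS - lw - (g/K + 3*g^2/(2*K*(1-g)))*G - g/K*xj - g^2/(2*K^2*(1-g))*X"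
  apply (simp add: divide_simps power2_eq_square)
  apply (simp add: algebra_simps)
  done

lemma upd_eq: "rex3_update (\<lambda>z. z) \<gamma> K x t w a b i = w i * exp (\<gamma> / real K * ch \<gamma> K x t w a b i)"
  by (cases "a = b"; cases "i = a"; cases "i = b") (auto simp: rex3_update_def ch_def Let_def)

lemma swap3: "(\<Sum>a\<in>A. \<Sum>b\<in>B. \<Sum>i\<in>C. f a b i) = (\<Sum>i\<in>C. \<Sum>a\<in>A. \<Sum>b\<in>B. f a b i)"
proof -
  have "(\<Sum>a\<in>A. \<Sum>b\<in>B. \<Sum>i\<in>C. f a b i) = (\<Sum>a\<in>A. \<Sum>i\<in>C. \<Sum>b\<in>B. f a b i)"
    by (rule sum.cong[OF refl], rule sum.swap)
  also have "\<dots> = (\<Sum>i\<in>C. \<Sum>a\<in>A. \<Sum>b\<in>B. f a b i)" by (rule sum.swap)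
  finally show ?thesis .
qed

lemma E2_add: "E2 \<gamma> K w (\<lambda>a b. f a b + g a b) = E2 \<gamma> K w f + E2 \<gamma> K w g"
  by (simp add: E2_def algebra_simps sum.distrib)
lemma E2_diff: "E2 \<gamma> K w (\<lambda>a b. f a b - g a b) = E2 \<gamma> K w f - E2 \<gamma> K w g"
  by (simp add: E2_def algebra_simps sum_subtractf)
lemma E2_cmult: "E2 \<gamma> K w (\<lambda>a b. c * f a b) = c * E2 \<gamma> K w f"
  by (simp add: E2_def sum_distrib_left ac_simps)
lemma E2_sum: "E2 \<gamma> K w (\<lambda>a b. \<Sum>i<K. f i a b) = (\<Sum>i<K. E2 \<gamma> K w (f i))"
proof -
  have "E2 \<gamma> K w (\<lambda>a b. \<Sum>i<K. f i a b) = (\<Sum>a<K. \<Sum>b<K. \<Sum>i<K. rex3_prob \<gamma> K w a * rex3_prob \<gamma> K w b * f i a b)"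
    unfolding E2_def by (simp add: sum_distrib_left)
  also have "\<dots> = (\<Sum>i<K. \<Sum>a<K. \<Sum>b<K. rex3_prob \<gamma> K w a * rex3_prob \<gamma> K w b * f i a b)"
    by (rule swap3)
  finally show ?thesis unfolding E2_def .
qed

context
  fixes \<gamma> :: real and K :: nat and w :: "nat \<Rightarrow> real"
  assumes K2: "K \<ge> 2" and g0: "0 < \<gamma>" and g1: "\<gamma> < 1/2"
    and wpos: "\<And>i. i < K \<Longrightarrow> 0 < w i"
begin

lemma S_pos: "0 < (\<Sum>j<K. w j)"
  using K2 wpos by (intro sum_pos) (auto simp: lessThan_empty_iff)

lemma p_ge: "i < K \<Longrightarrow> \<gamma> / K \<le> rex3_prob \<gamma> K w i"
  using S_pos wpos[of i] g1 unfolding rex3_prob_def by simp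

lemma p_pos: "i < K \<Longrightarrow> 0 < rex3_prob \<gamma> K w i"
  using p_ge[of i] g0 K2 by (smt (verit) divide_pos_pos of_nat_0_less_iff less_le_trans zero_less_numeral)

lemma p_sum: "(\<Sum>i<K. rex3_prob \<gamma> K w i) = 1"
proof -
  have "(\<Sum>i<K. rex3_prob \<gamma> K w i) = (\<Sum>i<K. (1 - \<gamma>) * w i) / (\<Sum>j<K. w j) + real K * (\<gamma> / K)"
    unfolding rex3_prob_def by (simp add: sum.distrib sum_divide_distrib)
  also have "\<dots> = 1" using S_pos K2 by (simp add: sum_distrib_left[symmetric])
  finally show ?thesis .
qed

lemma E2_const: "E2 \<gamma> K w (\<lambda>a b. c) = c"
  unfolding E2_def by (simp add: sum_distrib_right[symmetric] p_sum flip: sum_distrib_left)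

lemma E2_mono: "(\<And>a b. a < K \<Longrightarrow> b < K \<Longrightarrow> f a b \<le> g a b) \<Longrightarrow> E2 \<gamma> K w f \<le> E2 \<gamma> K w g"
  unfolding E2_def using p_pos
  by (intro sum_mono mult_left_mono) (auto intro: mult_nonneg_nonneg less_imp_le)

lemma pmf_arm: "pmf (rex3_arm \<gamma> K w) i = (if i < K then rex3_prob \<gamma> K w i else 0)"
proof -
  have nn: "\<And>i. 0 \<le> (if i < K then rex3_prob \<gamma> K w i else 0)" using p_pos by (simp add: less_imp_le order.strict_implies_order)
  have "(\<integral>\<^sup>+i. ennreal (if i < K then rex3_prob \<gamma> K w i else 0) \<partial>count_space UNIV)
       = (\<Sum>i<K. ennreal (if i < K then rex3_prob \<gamma> K w i else 0))"
    by (rule nn_integral_count_space') auto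
  also have "\<dots> = ennreal (\<Sum>i<K. rex3_prob \<gamma> K w i)"
    by (subst sum_ennreal) (auto simp: less_imp_le p_pos)
  also have "\<dots> = 1" using p_sum by simp
  finally have pr: "(\<integral>\<^sup>+i. ennreal (if i < K then rex3_prob \<gamma> K w i else 0) \<partial>count_space UNIV) = 1" .
  show ?thesis unfolding rex3_arm_def by (rule pmf_embed_pmf[OF nn pr])
qed

lemma set_arm: "set_pmf (rex3_arm \<gamma> K w) \<subseteq> {..<K}"
  using pmf_arm by (auto simp: set_pmf_iff split: if_splits)

lemma fin_arm: "finite (set_pmf (rex3_arm \<gamma> K w))"
  by (rule finite_subset[OF set_arm]) simp

lemma E_pair:
  "measure_pmf.expectation (bind_pmf (rex3_arm \<gamma> K w) (\<lambda>a. bind_pmf (rex3_arm \<gamma> K w) (\<lambda>b. return_pmf (F a b)))) h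
     = E2 \<gamma> K w (\<lambda>a b. h (F a b))"
proof -
  have inner: "measure_pmf.expectation (bind_pmf (rex3_arm \<gamma> K w) (\<lambda>b. return_pmf (F a b))) h
      = (\<Sum>b<K. rex3_prob \<gamma> K w b * h (F a b))" for a
    by (subst pmf_expectation_bind[of "{..<K}"]) (use set_arm pmf_arm fin_arm in auto)
  show ?thesis
    apply (subst pmf_expectation_bind[of "{..<K}"])
    using set_arm fin_arm apply auto[3]
    unfolding E2_def inner by (auto simp: pmf_arm sum_distrib_left mult.assoc intro!: sum.cong)
qed

end


lemma sum_if1: "i < (K::nat) \<Longrightarrow> (\<Sum>a<K. \<Sum>b<K. if i = a then f a b else 0) = (\<Sum>b<K. f i b :: real)"
proof -
  assume i: "i < K"
  have "(\<Sum>a<K. \<Sum>b<K. if i = a then f a b else 0) = (\<Sum>a<K. if i = a then (\<Sum>b<K. f a b) else 0)"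
    by (rule sum.cong) auto
  also have "\<dots> = (\<Sum>b<K. f i b)" using i by (subst sum.delta'[OF finite_lessThan]) simp
  finally show ?thesis .
qed

lemma sum_if2: "i < (K::nat) \<Longrightarrow> (\<Sum>a<K. \<Sum>b<K. if i = b then f a b else 0) = (\<Sum>a<K. f a i :: real)"
proof (rule sum.cong[OF refl])
  fix a assume "i < K"
  thus "(\<Sum>b<K. if i = b then f a b else 0) = f a i" by (subst sum.delta'[OF finite_lessThan]) simp
qed

lemma sqdiff: "0 \<le> u \<Longrightarrow> u \<le> 1 \<Longrightarrow> 0 \<le> v \<Longrightarrow> v \<le> (1::real) \<Longrightarrow> (u - v)^2 \<le> u + v"
proof -
  assume h: "0 \<le> u" "u \<le> 1" "0 \<le> v" "v \<le> 1"
  have a: "\<bar>u - v\<bar> \<le> 1" using h by auto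
  have "(u - v)^2 = \<bar>u - v\<bar> * \<bar>u - v\<bar>" by (simp add: power2_eq_square)
  also have "\<dots> \<le> \<bar>u - v\<bar> * 1" using a by (intro mult_left_mono) auto
  also have "\<dots> \<le> u + v" using h by auto
  finally show ?thesis .
qed

context
  fixes \<gamma> :: real and K :: nat and w :: "nat \<Rightarrow> real" and x :: "nat \<Rightarrow> nat \<Rightarrow> real" and t :: nat
  assumes K2: "K \<ge> 2" and g0: "0 < \<gamma>" and g1: "\<gamma> < 1/2"
    and wpos: "\<And>i. i < K \<Longrightarrow> 0 < w i"
    and xb: "\<And>i. i < K \<Longrightarrow> 0 \<le> x t i \<and> x t i \<le> 1"
begin

abbreviation "pp \<equiv> rex3_prob \<gamma> K w"
abbreviation "xbar \<equiv> (\<Sum>b<K. pp b * x t b)"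
abbreviation "XX \<equiv> (\<Sum>i<K. x t i)"

lemma pf1: "i < K \<Longrightarrow> 0 < pp i" by (rule p_pos) (use K2 g0 g1 wpos in auto)
lemma pf2: "i < K \<Longrightarrow> \<gamma> / K \<le> pp i" by (rule p_ge) (use K2 g0 g1 wpos in auto)
lemma pf3: "(\<Sum>i<K. pp i) = 1" by (rule p_sum) (use K2 g0 g1 wpos in auto)
lemma pf4: "0 < (\<Sum>j<K. w j)" by (rule S_pos) (use K2 g0 g1 wpos in auto)
lemma ef1: "E2 \<gamma> K w (\<lambda>a b. c) = c" by (rule E2_const) (use K2 g0 g1 wpos in auto)
lemma ef2: "(\<And>a b. a < K \<Longrightarrow> b < K \<Longrightarrow> f a b \<le> g a b) \<Longrightarrow> E2 \<gamma> K w f \<le> E2 \<gamma> K w g"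
  by (rule E2_mono) (use K2 g0 g1 wpos in auto)
lemmas pf = pf1 pf2 pf3 pf4
lemmas ef = ef1 ef2

lemma Kpos: "0 < real K" using K2 by simp

lemma ch_bound: "a < K \<Longrightarrow> b < K \<Longrightarrow> \<bar>\<gamma> / real K * ch \<gamma> K x t w a b i\<bar> \<le> 1/2"
proof -
  assume ab: "a < K" "b < K"
  have d: "\<bar>x t a - x t b\<bar> \<le> 1" using xb[of a] xb[of b] ab by auto
  have gk: "0 < \<gamma> / real K" using g0 Kpos by simp
  have T: "\<bar>\<gamma> / real K * ((x t a - x t b) / (2 * pp c))\<bar> \<le> 1/2" if c: "c < K" for c
  proof -
    have pc: "0 < pp c" "\<gamma> / real K \<le> pp c" using pf c by auto
    have m: "\<gamma> / real K * \<bar>x t a - x t b\<bar> \<le> \<gamma> / real K"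
      using mult_left_mono[OF d, of "\<gamma> / real K"] gk by simp
    have "\<bar>\<gamma> / real K * ((x t a - x t b) / (2 * pp c))\<bar> = (\<gamma> / real K * \<bar>x t a - x t b\<bar>) / (2 * pp c)"
      using pc gk g0 by (simp add: abs_mult abs_divide)
    also have "\<dots> \<le> (\<gamma> / real K) / (2 * pp c)"
      using m pc by (intro divide_right_mono) auto
    also have "\<dots> \<le> pp c / (2 * pp c)" using pc by (intro divide_right_mono) auto
    also have "\<dots> = 1/2" using pc by simp
    finally show ?thesis .
  qed
  show ?thesis
    using T[of a] T[of b] ab
    by (cases "i = a"; cases "i = b") (auto simp: ch_def)
qed

lemma E2_fst: "E2 \<gamma> K w (\<lambda>a b. f a) = (\<Sum>a<K. pp a * f a)"
proof -
  have "\<And>a. (\<Sum>b<K. pp a * pp b * f a) = pp a * f a * (\<Sum>b<K. pp b)"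
    by (simp add: sum_distrib_left ac_simps)
  thus ?thesis unfolding E2_def using pf by simp
qed

lemma E2_snd: "E2 \<gamma> K w (\<lambda>a b. f b) = (\<Sum>b<K. pp b * f b)"
proof -
  have "\<And>a. (\<Sum>b<K. pp a * pp b * f b) = pp a * (\<Sum>b<K. pp b * f b)"
    by (simp add: sum_distrib_left ac_simps)
  hence "E2 \<gamma> K w (\<lambda>a b. f b) = (\<Sum>a<K. pp a) * (\<Sum>b<K. pp b * f b)"
    unfolding E2_def by (simp add: sum_distrib_right)
  thus ?thesis using pf by simp
qed

lemma E_gain: "E2 \<gamma> K w (\<lambda>a b. (x t a + x t b) / 2) = xbar"
proof -
  have "E2 \<gamma> K w (\<lambda>a b. (x t a + x t b) / 2) = E2 \<gamma> K w (\<lambda>a b. (1/2) * x t a + (1/2) * x t b)"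
    by (simp add: add_divide_distrib)
  also have "\<dots> = (1/2) * xbar + (1/2) * xbar"
    by (simp only: E2_add E2_cmult E2_fst E2_snd)
  finally show ?thesis by simp
qed

lemma E_ch: "i < K \<Longrightarrow> E2 \<gamma> K w (\<lambda>a b. ch \<gamma> K x t w a b i) = x t i - xbar"
proof -
  assume i: "i < K"
  have pt: "pp a * pp b * ch \<gamma> K x t w a b i =
      (if i = a then pp b * (x t a - x t b) / 2 else 0) - (if i = b then pp a * (x t a - x t b) / 2 else 0)"
    if ab: "a < K" "b < K" for a b
  proof -
    have "pp a \<noteq> 0" "pp b \<noteq> 0" using pf(1)[of a] pf(1)[of b] ab by auto
    thus ?thesis by (cases "i = a"; cases "i = b") (auto simp: ch_def field_simps)
  qed
  have "E2 \<gamma> K w (\<lambda>a b. ch \<gamma> K x t w a b i) =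
      (\<Sum>a<K. \<Sum>b<K. (if i = a then pp b * (x t a - x t b) / 2 else 0))
      - (\<Sum>a<K. \<Sum>b<K. (if i = b then pp a * (x t a - x t b) / 2 else 0))"
    unfolding E2_def by (simp add: pt sum_subtractf)
  also have "\<dots> = (\<Sum>b<K. pp b * (x t i - x t b) / 2) - (\<Sum>a<K. pp a * (x t a - x t i) / 2)"
    using i by (simp only: sum_if1 sum_if2)
  also have "\<dots> = (\<Sum>b<K. pp b * x t i - pp b * x t b)"
    by (subst sum_subtractf[symmetric]) (rule sum.cong, auto simp: field_simps)
  also have "\<dots> = x t i * (\<Sum>b<K. pp b) - xbar"
    by (simp add: sum_subtractf sum_distrib_left mult.commute)
  also have "\<dots> = x t i - xbar" using pf by simp
  finally show ?thesis .
qed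

lemma E_ch2: "i < K \<Longrightarrow> pp i * E2 \<gamma> K w (\<lambda>a b. (ch \<gamma> K x t w a b i)^2) \<le> (x t i + xbar) / 2"
proof -
  assume i: "i < K"
  have pt: "pp i * (pp a * pp b * (ch \<gamma> K x t w a b i)^2) =
      (if i = a then pp b * (x t a - x t b)^2 / 4 else 0) + (if i = b then pp a * (x t a - x t b)^2 / 4 else 0)"
    if ab: "a < K" "b < K" for a b
  proof -
    have "pp a \<noteq> 0" "pp b \<noteq> 0" using pf(1)[of a] pf(1)[of b] ab by auto
    thus ?thesis by (cases "i = a"; cases "i = b") (auto simp: ch_def field_simps power2_eq_square)
  qed
  have "pp i * E2 \<gamma> K w (\<lambda>a b. (ch \<gamma> K x t w a b i)^2)
     = (\<Sum>a<K. \<Sum>b<K. (if i = a then pp b * (x t a - x t b)^2 / 4 else 0))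
      + (\<Sum>a<K. \<Sum>b<K. (if i = b then pp a * (x t a - x t b)^2 / 4 else 0))"
    unfolding E2_def by (simp add: sum_distrib_left pt sum.distrib)
  also have "\<dots> = (\<Sum>b<K. pp b * (x t i - x t b)^2 / 4) + (\<Sum>a<K. pp a * (x t a - x t i)^2 / 4)"
    using i by (simp only: sum_if1 sum_if2)
  also have "\<dots> \<le> (\<Sum>b<K. pp b * (x t i + x t b) / 4) + (\<Sum>a<K. pp a * (x t a + x t i) / 4)"
    using pf xb i
    by (intro add_mono sum_mono divide_right_mono mult_left_mono sqdiff) (auto intro: less_imp_le)
  also have "\<dots> = (\<Sum>b<K. pp b * x t i + pp b * x t b) / 2"
    by (simp add: sum_divide_distrib[symmetric] sum.distrib algebra_simps)
  also have "\<dots> = (x t i * (\<Sum>b<K. pp b) + xbar) / 2"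
    by (simp add: sum.distrib sum_distrib_left mult.commute)
  also have "\<dots> = (x t i + xbar) / 2" using pf by simp
  finally show ?thesis .
qed


lemma L_S:
  assumes ab: "a < K" "b < K"
  shows "ln (\<Sum>i<K. rex3_update (\<lambda>z. z) \<gamma> K x t w a b i) \<le> ln (\<Sum>j<K. w j)
     + (\<Sum>i<K. (\<gamma> / K * (w i / (\<Sum>j<K. w j))) * ch \<gamma> K x t w a b i)
     + (\<Sum>i<K. ((\<gamma> / K)^2 / (1 - \<gamma>) * pp i) * (ch \<gamma> K x t w a b i)^2)"
proof -
  define S where "S = (\<Sum>j<K. w j)"
  define z where "z i = \<gamma> / K * ch \<gamma> K x t w a b i" for i
  have Sp: "0 < S" using pf S_def by auto
  have up: "\<And>i. rex3_update (\<lambda>z. z) \<gamma> K x t w a b i = w i * exp (z i)" by (simp add: upd_eq z_def)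
  have ez: "exp (z i) \<le> 1 + z i + (z i)^2" if "i < K" for i
  proof -
    have zb: "\<bar>z i\<bar> \<le> 1/2" unfolding z_def by (rule ch_bound[OF ab])
    show ?thesis by (intro exp_quad_bound) (use zb in \<open>auto simp: abs_le_iff\<close>)
  qed
  have S'p: "0 < (\<Sum>i<K. w i * exp (z i))"
    using K2 wpos by (intro sum_pos) (auto simp: lessThan_empty_iff)
  have Sle: "(\<Sum>i<K. w i * exp (z i)) \<le> (\<Sum>i<K. w i * (1 + z i + (z i)^2))"
    using ez wpos by (intro sum_mono mult_left_mono) (auto intro: less_imp_le)
  also have "\<dots> = S + (\<Sum>i<K. w i * z i) + (\<Sum>i<K. w i * (z i)^2)"
    by (simp add: S_def sum.distrib algebra_simps)
  finally have Sle2: "(\<Sum>i<K. w i * exp (z i)) - S \<le> (\<Sum>i<K. w i * z i) + (\<Sum>i<K. w i * (z i)^2)" by simp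
  have qle: "w i / S \<le> pp i / (1 - \<gamma>)" if "i < K" for i
  proof -
    have "(1 - \<gamma>) * (w i / S) \<le> pp i"
      using g0 Kpos unfolding rex3_prob_def S_def by simp
    thus ?thesis using g1 by (simp add: le_divide_eq mult.commute)
  qed
  have "ln (\<Sum>i<K. w i * exp (z i)) - ln S = ln ((\<Sum>i<K. w i * exp (z i)) / S)"
    using S'p Sp by (simp add: ln_div)
  also have "\<dots> \<le> (\<Sum>i<K. w i * exp (z i)) / S - 1"
    using S'p Sp by (intro ln_le_minus_one) simp
  also have "\<dots> = ((\<Sum>i<K. w i * exp (z i)) - S) / S" using Sp by (simp add: field_simps)
  also have "\<dots> \<le> ((\<Sum>i<K. w i * z i) + (\<Sum>i<K. w i * (z i)^2)) / S"
    using Sle2 Sp by (intro divide_right_mono) auto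
  also have "\<dots> = (\<Sum>i<K. (\<gamma> / K * (w i / S)) * ch \<gamma> K x t w a b i) + (\<Sum>i<K. w i / S * ((\<gamma> / K)^2 * (ch \<gamma> K x t w a b i)^2))"
    unfolding add_divide_distrib sum_divide_distrib
    by (intro arg_cong2[where f="(+)"] sum.cong refl) (auto simp: z_def field_simps power2_eq_square)
  also have "(\<Sum>i<K. w i / S * ((\<gamma> / K)^2 * (ch \<gamma> K x t w a b i)^2))
      \<le> (\<Sum>i<K. pp i / (1 - \<gamma>) * ((\<gamma> / K)^2 * (ch \<gamma> K x t w a b i)^2))"
    using qle by (intro sum_mono mult_right_mono) auto
  also have "(\<Sum>i<K. pp i / (1 - \<gamma>) * ((\<gamma> / K)^2 * (ch \<gamma> K x t w a b i)^2))
      = (\<Sum>i<K. ((\<gamma> / K)^2 / (1 - \<gamma>) * pp i) * (ch \<gamma> K x t w a b i)^2)"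
    by (rule sum.cong) (auto simp: field_simps)
  finally show ?thesis unfolding up S_def by simp
qed

lemma L_j:
  assumes "j < K"
  shows "E2 \<gamma> K w (\<lambda>a b. ln (rex3_update (\<lambda>z. z) \<gamma> K x t w a b j)) = ln (w j) + \<gamma> / K * (x t j - xbar)"
proof -
  have "\<And>a b. ln (rex3_update (\<lambda>z. z) \<gamma> K x t w a b j) = ln (w j) + \<gamma> / K * ch \<gamma> K x t w a b j"
    using wpos[OF assms] by (simp add: upd_eq ln_mult)
  hence "E2 \<gamma> K w (\<lambda>a b. ln (rex3_update (\<lambda>z. z) \<gamma> K x t w a b j))
      = E2 \<gamma> K w (\<lambda>a b. ln (w j) + \<gamma> / K * ch \<gamma> K x t w a b j)" by simp
  also have "\<dots> = ln (w j) + \<gamma> / K * (x t j - xbar)"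
    by (simp only: E2_add E2_cmult ef(1) E_ch[OF assms])
  finally show ?thesis .
qed

lemma E_S:
  "E2 \<gamma> K w (\<lambda>a b. ln (\<Sum>i<K. rex3_update (\<lambda>z. z) \<gamma> K x t w a b i)) \<le> ln (\<Sum>j<K. w j)
     + \<gamma> / K * (\<gamma> * xbar - \<gamma> / K * XX) / (1 - \<gamma>) + (\<gamma> / K)^2 / (1 - \<gamma>) * (XX + K * xbar) / 2"
proof -
  define S where "S = (\<Sum>j<K. w j)"
  define c2 where "c2 = (\<gamma> / K)^2 / (1 - \<gamma>)"
  have c2: "0 \<le> c2" using g1 by (simp add: c2_def)
  have "E2 \<gamma> K w (\<lambda>a b. ln (\<Sum>i<K. rex3_update (\<lambda>z. z) \<gamma> K x t w a b i)) \<le>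
     E2 \<gamma> K w (\<lambda>a b. ln S + (\<Sum>i<K. (\<gamma> / K * (w i / S)) * ch \<gamma> K x t w a b i)
     + (\<Sum>i<K. (c2 * pp i) * (ch \<gamma> K x t w a b i)^2))"
    apply (rule ef(2)) unfolding S_def c2_def by (rule L_S)
  also have "\<dots> = ln S + (\<Sum>i<K. (\<gamma> / K * (w i / S)) * E2 \<gamma> K w (\<lambda>a b. ch \<gamma> K x t w a b i))
     + (\<Sum>i<K. (c2 * pp i) * E2 \<gamma> K w (\<lambda>a b. (ch \<gamma> K x t w a b i)^2))"
    by (simp only: E2_add E2_sum E2_cmult ef(1))
  also have "\<dots> \<le> ln S + (\<Sum>i<K. (\<gamma> / K * (w i / S)) * (x t i - xbar))
     + (\<Sum>i<K. c2 * ((x t i + xbar) / 2))"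
  proof -
    have "(\<Sum>i<K. (\<gamma> / K * (w i / S)) * E2 \<gamma> K w (\<lambda>a b. ch \<gamma> K x t w a b i))
        = (\<Sum>i<K. (\<gamma> / K * (w i / S)) * (x t i - xbar))"
      by (rule sum.cong) (auto simp: E_ch)
    moreover have "(\<Sum>i<K. (c2 * pp i) * E2 \<gamma> K w (\<lambda>a b. (ch \<gamma> K x t w a b i)^2))
        \<le> (\<Sum>i<K. c2 * ((x t i + xbar) / 2))"
    proof (rule sum_mono)
      fix i assume "i \<in> {..<K}"
      hence "pp i * E2 \<gamma> K w (\<lambda>a b. (ch \<gamma> K x t w a b i)^2) \<le> (x t i + xbar) / 2" using E_ch2 by auto
      thus "(c2 * pp i) * E2 \<gamma> K w (\<lambda>a b. (ch \<gamma> K x t w a b i)^2) \<le> c2 * ((x t i + xbar) / 2)"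
        using c2 by (simp add: mult.assoc mult_left_mono)
    qed
    ultimately show ?thesis by simp
  qed
  also have "(\<Sum>i<K. (\<gamma> / K * (w i / S)) * (x t i - xbar)) = \<gamma> / K * (\<gamma> * xbar - \<gamma> / K * XX) / (1 - \<gamma>)"
  proof -
    have q: "w i / S = (pp i - \<gamma> / K) / (1 - \<gamma>)" for i
    proof -
      have "pp i - \<gamma> / K = (1 - \<gamma>) * (w i / S)" unfolding rex3_prob_def S_def by simp
      moreover have "1 - \<gamma> \<noteq> 0" using g1 by simp
      ultimately show ?thesis by simp
    qed
    have "(\<Sum>i<K. (\<gamma> / K * (w i / S)) * (x t i - xbar))
        = \<gamma> / K / (1 - \<gamma>) * (\<Sum>i<K. pp i * x t i - xbar * pp i - \<gamma> / K * x t i + \<gamma> / K * xbar)"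
    proof -
      have "(\<Sum>i<K. (\<gamma> / K * (w i / S)) * (x t i - xbar))
        = (\<Sum>i<K. \<gamma> / K / (1 - \<gamma>) * (pp i * x t i - xbar * pp i - \<gamma> / K * x t i + \<gamma> / K * xbar))"
        by (rule sum.cong[OF refl]) (simp add: q field_simps)
      also have "\<dots> = \<gamma> / K / (1 - \<gamma>) * (\<Sum>i<K. pp i * x t i - xbar * pp i - \<gamma> / K * x t i + \<gamma> / K * xbar)"
        by (rule sum_distrib_left[symmetric])
      finally show ?thesis .
    qed
    also have "(\<Sum>i<K. pp i * x t i - xbar * pp i - \<gamma> / K * x t i + \<gamma> / K * xbar)
        = xbar - xbar * (\<Sum>i<K. pp i) - \<gamma> / K * XX + K * (\<gamma> / K * xbar)"
      by (simp add: sum.distrib sum_subtractf sum_distrib_left)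
    also have "\<dots> = \<gamma> * xbar - \<gamma> / K * XX" using pf Kpos by simp
    finally show ?thesis by simp
  qed
  also have "(\<Sum>i<K. c2 * ((x t i + xbar) / 2)) = c2 * (XX + K * xbar) / 2"
    by (simp add: sum_distrib_left[symmetric] sum_divide_distrib[symmetric] sum.distrib)
  finally show ?thesis by (simp add: S_def c2_def)
qed

lemma step:
  assumes j: "j < K"
  shows "E2 \<gamma> K w (\<lambda>a b. Psi \<gamma> K j (rex3_update (\<lambda>z. z) \<gamma> K x t w a b, g + (x t a + x t b) / 2))
     \<le> Psi \<gamma> K j (w, g) - \<gamma> / K * x t j - \<gamma>^2 / (2 * (real K)^2 * (1 - \<gamma>)) * XX"
proof -
  define c where "c = \<gamma> / real K + 3 * \<gamma>^2 / (2 * real K * (1 - \<gamma>))"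
  have "E2 \<gamma> K w (\<lambda>a b. Psi \<gamma> K j (rex3_update (\<lambda>z. z) \<gamma> K x t w a b, g + (x t a + x t b) / 2))
    = E2 \<gamma> K w (\<lambda>a b. ln (\<Sum>i<K. rex3_update (\<lambda>z. z) \<gamma> K x t w a b i))
      - E2 \<gamma> K w (\<lambda>a b. ln (rex3_update (\<lambda>z. z) \<gamma> K x t w a b j))
      - c * (g + E2 \<gamma> K w (\<lambda>a b. (x t a + x t b) / 2))"
    unfolding Psi_def c_def fst_conv snd_conv by (simp only: E2_diff E2_cmult E2_add ef(1))
  also have "\<dots> \<le> (ln (\<Sum>j<K. w j)
     + \<gamma> / K * (\<gamma> * xbar - \<gamma> / K * XX) / (1 - \<gamma>) + (\<gamma> / K)^2 / (1 - \<gamma>) * (XX + K * xbar) / 2)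
     - (ln (w j) + \<gamma> / K * (x t j - xbar)) - c * (g + xbar)"
    unfolding L_j[OF j] E_gain using E_S by simp
  also have "\<dots> = Psi \<gamma> K j (w, g) - \<gamma> / K * x t j - \<gamma>^2 / (2 * (real K)^2 * (1 - \<gamma>)) * XX"
    unfolding Psi_def c_def fst_conv snd_conv by (rule alg) (use Kpos g1 in auto)
  finally show ?thesis .
qed

end

lemma final_alg:
  fixes G E U m L g K e :: real
  assumes K: "K \<ge> 2" and g0: "0 < g" and g1: "g < 1/2" and L: "0 \<le> L"
    and h: "- (g / K + 3 * g^2 / (2 * K * (1 - g))) * E \<le> L - (g / K * G + g^2 / (2 * K^2 * (1 - g)) * (K * U))"
    and EG: "E \<le> G" and mU: "m \<le> U" and m0: "0 \<le> m" and mG: "m \<le> G" and e: "5/2 \<le> e"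
  shows "G - E \<le> K * L / g + g * (e * G - (4 - e) * m)"
proof -
  define P where "P = K * L / g"
  define M where "M = 2 * K * (1 - g) / g"
  have M0: "0 < M" using K g0 g1 by (simp add: M_def)
  have Kn: "K \<noteq> 0" "1 - g \<noteq> 0" "g \<noteq> 0" using K g0 g1 by auto
  have e1: "M * (- (g / K + 3 * g^2 / (2 * K * (1 - g))) * E) = - (2 * (1 - g) + 3 * g) * E"
    using Kn unfolding M_def by (simp add: divide_simps power2_eq_square) (simp add: algebra_simps)
  have e2: "M * (L - (g / K * G + g^2 / (2 * K^2 * (1 - g)) * (K * U))) = 2 * (1 - g) * P - 2 * (1 - g) * G - g * U"
    using Kn unfolding M_def P_def by (simp add: divide_simps power2_eq_square)
  have hm: "M * (- (g / K + 3 * g^2 / (2 * K * (1 - g))) * E) \<le> M * (L - (g / K * G + g^2 / (2 * K^2 * (1 - g)) * (K * U)))"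
    using h M0 by (intro mult_left_mono) auto
  have h1: "- (2 * (1 - g) + 3 * g) * E \<le> 2 * (1 - g) * P - 2 * (1 - g) * G - g * U" using hm[unfolded e1 e2] .
  have h2: "2 * G - 2 * E \<le> 2 * P - 2 * (g * P) + 2 * (g * G) + g * E - g * U"
    using h1 by (simp add: algebra_simps)
  have f1: "g * E \<le> g * G" using EG g0 by (intro mult_left_mono) auto
  have f2: "g * m \<le> g * U" using mU g0 by (intro mult_left_mono) auto
  have f3: "0 \<le> g * P" using g0 K L unfolding P_def by simp
  have f4: "3/2 * (g * G) - 1/2 * (g * m) \<le> g * (e * G - (4 - e) * m)"
  proof -
    have "g * (e * G - (4 - e) * m) - (3/2 * (g * G) - 1/2 * (g * m)) = g * ((e - 3/2) * (G - m) + (2 * e - 5) * m)"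
      by (simp add: field_simps)
    also have "\<dots> \<ge> 0" using g0 e mG m0 by (intro mult_nonneg_nonneg add_nonneg_nonneg) auto
    finally show ?thesis by simp
  qed
  show ?thesis using h2 f1 f2 f3 f4 unfolding P_def[symmetric] by linarith
qed

definition step_pmf where
  "step_pmf \<gamma> K x t w g = bind_pmf (rex3_arm \<gamma> K w) (\<lambda>a. bind_pmf (rex3_arm \<gamma> K w) (\<lambda>b.
      return_pmf (rex3_update (\<lambda>z. z) \<gamma> K x t w a b, g + (x t a + x t b) / 2)))"

lemma run_Suc': "rex3_run (\<lambda>z. z) \<gamma> K x (Suc t)
   = bind_pmf (rex3_run (\<lambda>z. z) \<gamma> K x t) (\<lambda>s. step_pmf \<gamma> K x (Suc t) (fst s) (snd s))"
  by (simp add: step_pmf_def case_prod_unfold)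

lemma step_props:
  assumes "K \<ge> 2" "0 < \<gamma>" "\<gamma> < 1/2" "\<And>i. i < K \<Longrightarrow> 0 < w i"
  shows "finite (set_pmf (step_pmf \<gamma> K x t w g)) \<and> (\<forall>s\<in>set_pmf (step_pmf \<gamma> K x t w g). \<forall>i<K. 0 < fst s i)"
proof -
  have fa: "finite (set_pmf (rex3_arm \<gamma> K w))" by (rule fin_arm) (use assms in auto)
  show ?thesis using fa assms(4) by (auto simp: step_pmf_def upd_eq intro: mult_pos_pos)
qed

lemma run_props:
  "K \<ge> 2 \<Longrightarrow> 0 < \<gamma> \<Longrightarrow> \<gamma> < 1/2 \<Longrightarrow> finite (set_pmf (rex3_run (\<lambda>z. z) \<gamma> K x t))
     \<and> (\<forall>s\<in>set_pmf (rex3_run (\<lambda>z. z) \<gamma> K x t). \<forall>i<K. 0 < fst s i)"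
proof (induction t)
  case 0 show ?case by simp
next
  case (Suc t)
  have st: "finite (set_pmf (step_pmf \<gamma> K x (Suc t) (fst s) (snd s)))
      \<and> (\<forall>s'\<in>set_pmf (step_pmf \<gamma> K x (Suc t) (fst s) (snd s)). \<forall>i<K. 0 < fst s' i)"
    if "s \<in> set_pmf (rex3_run (\<lambda>z. z) \<gamma> K x t)" for s
    by (rule step_props) (use Suc that in auto)
  show ?case unfolding run_Suc' using Suc st by auto
qed

lemma main_ind:
  assumes K2: "K \<ge> 2" and g0: "0 < \<gamma>" and g1: "\<gamma> < 1/2" and j: "j < K"
    and xb: "\<And>s i. s \<in> {1..T} \<Longrightarrow> i < K \<Longrightarrow> 0 \<le> x s i \<and> x s i \<le> 1"
  shows "t \<le> T \<Longrightarrow> measure_pmf.expectation (rex3_run (\<lambda>z. z) \<gamma> K x t) (Psi \<gamma> K j)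
     \<le> ln (real K) - (\<Sum>s=1..t. \<gamma> / K * x s j + \<gamma>^2 / (2 * (real K)^2 * (1 - \<gamma>)) * (\<Sum>i<K. x s i))"
proof (induction t)
  case 0 show ?case by (simp add: Psi_def)
next
  case (Suc t)
  define R where "R = rex3_run (\<lambda>z. z) \<gamma> K x t"
  define A where "A = set_pmf R"
  have fin: "finite A" and pos: "\<forall>s\<in>A. \<forall>i<K. 0 < fst s i"
    using run_props[OF K2 g0 g1] unfolding A_def R_def by auto
  define \<delta> where "\<delta> = \<gamma> / K * x (Suc t) j + \<gamma>^2 / (2 * (real K)^2 * (1 - \<gamma>)) * (\<Sum>i<K. x (Suc t) i)"
  have xb': "\<And>i. i < K \<Longrightarrow> 0 \<le> x (Suc t) i \<and> x (Suc t) i \<le> 1" using xb Suc.prems by auto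
  have stepE: "measure_pmf.expectation (step_pmf \<gamma> K x (Suc t) (fst s) (snd s)) (Psi \<gamma> K j) \<le> Psi \<gamma> K j s - \<delta>"
    if "s \<in> A" for s
  proof -
    have wp: "\<And>i. i < K \<Longrightarrow> 0 < fst s i" using pos that by auto
    have "measure_pmf.expectation (step_pmf \<gamma> K x (Suc t) (fst s) (snd s)) (Psi \<gamma> K j)
      = E2 \<gamma> K (fst s) (\<lambda>a b. Psi \<gamma> K j (rex3_update (\<lambda>z. z) \<gamma> K x (Suc t) (fst s) a b,
              snd s + (x (Suc t) a + x (Suc t) b) / 2))"
      unfolding step_pmf_def by (rule E_pair) (use K2 g0 g1 wp in auto)
    also have "\<dots> \<le> Psi \<gamma> K j (fst s, snd s) - \<gamma> / K * x (Suc t) j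
        - \<gamma>^2 / (2 * (real K)^2 * (1 - \<gamma>)) * (\<Sum>i<K. x (Suc t) i)"
      by (rule step) (use K2 g0 g1 wp xb' j in auto)
    finally show ?thesis by (simp add: \<delta>_def)
  qed
  have "measure_pmf.expectation (rex3_run (\<lambda>z. z) \<gamma> K x (Suc t)) (Psi \<gamma> K j)
      = (\<Sum>s\<in>A. pmf R s *\<^sub>R measure_pmf.expectation (step_pmf \<gamma> K x (Suc t) (fst s) (snd s)) (Psi \<gamma> K j))"
    unfolding run_Suc' R_def[symmetric]
  proof (rule pmf_expectation_bind)
    show "finite A" by (rule fin)
    show "set_pmf R \<subseteq> A" by (simp add: A_def)
    fix s assume "s \<in> A"
    thus "finite (set_pmf (step_pmf \<gamma> K x (Suc t) (fst s) (snd s)))"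
      using step_props[OF K2 g0 g1, of "fst s"] pos by auto
  qed
  also have "\<dots> \<le> (\<Sum>s\<in>A. pmf R s * (Psi \<gamma> K j s - \<delta>))"
    by (rule sum_mono) (simp add: stepE mult_left_mono pmf_nonneg)
  also have "\<dots> = (\<Sum>s\<in>A. Psi \<gamma> K j s * pmf R s) - \<delta> * (\<Sum>s\<in>A. pmf R s)"
    by (simp add: sum_subtractf sum_distrib_left algebra_simps)
  also have "(\<Sum>s\<in>A. pmf R s) = 1" by (rule sum_pmf_eq_1) (use fin in \<open>auto simp: A_def\<close>)
  also have "(\<Sum>s\<in>A. Psi \<gamma> K j s * pmf R s) = measure_pmf.expectation R (Psi \<gamma> K j)"
    by (rule integral_measure_pmf_real[symmetric]) (use fin in \<open>auto simp: A_def\<close>)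
  also have "measure_pmf.expectation R (Psi \<gamma> K j)
     \<le> ln (real K) - (\<Sum>s=1..t. \<gamma> / K * x s j + \<gamma>^2 / (2 * (real K)^2 * (1 - \<gamma>)) * (\<Sum>i<K. x s i))"
    unfolding R_def using Suc by simp
  finally show ?case by (simp add: \<delta>_def)
qed


theorem corollary1:
  fixes K T :: nat and x :: "nat \<Rightarrow> nat \<Rightarrow> real" and \<gamma> :: real
  assumes "K \<ge> 2" and "T \<ge> 1"
    and "\<And>t i. t \<in> {1..T} \<Longrightarrow> i < K \<Longrightarrow> 0 \<le> x t i \<and> x t i \<le> 1"
    and "0 < \<gamma>" and "\<gamma> < 1/2"
    and "EG_alg (\<lambda>z. z) \<gamma> K x T \<le> G_max K x T"
    and "EG_unif K x T \<ge> G_min K x T"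
  shows "G_max K x T - EG_alg (\<lambda>z. z) \<gamma> K x T
           \<le> real K * ln (real K) / \<gamma>
              + \<gamma> * (exp 1 * G_max K x T - (4 - exp 1) * G_min K x T)"
proof -
  note K2 = assms(1) and xb = assms(3) and g0 = assms(4) and g1 = assms(5)
  define f where "f i = (\<Sum>t=1..T. x t i)" for i
  have ne: "{..<K} \<noteq> {}" using K2 by (auto simp: lessThan_empty_iff)
  have "G_max K x T \<in> f ` {..<K}" unfolding G_max_def f_def[symmetric] using ne by (intro Max_in) auto
  then obtain j where j: "j < K" "G_max K x T = f j" by auto
  have "G_min K x T \<in> f ` {..<K}" unfolding G_min_def f_def[symmetric] using ne by (intro Min_in) auto
  then obtain j' where j': "j' < K" "G_min K x T = f j'" by auto
  have m0: "0 \<le> G_min K x T" using j' xb unfolding f_def by (auto intro!: sum_nonneg)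
  have mG: "G_min K x T \<le> G_max K x T"
  proof -
    have "G_min K x T \<le> f j" unfolding G_min_def f_def[symmetric] using j by (intro Min_le) auto
    thus ?thesis using j by simp
  qed
  define R where "R = rex3_run (\<lambda>z. z) \<gamma> K x T"
  define A where "A = set_pmf R"
  have fin: "finite A" and pos: "\<forall>s\<in>A. \<forall>i<K. 0 < fst s i"
    using run_props[OF K2 g0 g1] unfolding A_def R_def by auto
  define c where "c = \<gamma> / real K + 3 * \<gamma>^2 / (2 * real K * (1 - \<gamma>))"
  define E where "E = EG_alg (\<lambda>z. z) \<gamma> K x T"
  have Edef: "E = (\<Sum>s\<in>A. snd s * pmf R s)"
    unfolding E_def EG_alg_def R_def[symmetric]
    by (rule integral_measure_pmf_real) (use fin in \<open>auto simp: A_def\<close>)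
  have ind: "measure_pmf.expectation R (Psi \<gamma> K j)
     \<le> ln (real K) - (\<Sum>s=1..T. \<gamma> / K * x s j + \<gamma>^2 / (2 * (real K)^2 * (1 - \<gamma>)) * (\<Sum>i<K. x s i))"
    unfolding R_def by (rule main_ind[OF K2 g0 g1 j(1) xb]) auto
  have Kr: "real K \<noteq> 0" using K2 by simp
  have sumeq: "(\<Sum>s=1..T. \<gamma> / K * x s j + \<gamma>^2 / (2 * (real K)^2 * (1 - \<gamma>)) * (\<Sum>i<K. x s i))
      = \<gamma> / K * G_max K x T + \<gamma>^2 / (2 * (real K)^2 * (1 - \<gamma>)) * (real K * EG_unif K x T)"
    using Kr unfolding j(2) f_def EG_unif_def by (simp add: sum.distrib sum_distrib_left)
  have low: "- c * E \<le> measure_pmf.expectation R (Psi \<gamma> K j)"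
  proof -
    have "measure_pmf.expectation R (Psi \<gamma> K j) = (\<Sum>s\<in>A. Psi \<gamma> K j s * pmf R s)"
      by (rule integral_measure_pmf_real) (use fin in \<open>auto simp: A_def\<close>)
    also have "\<dots> \<ge> (\<Sum>s\<in>A. (- c * snd s) * pmf R s)"
    proof (rule sum_mono)
      fix s assume s: "s \<in> A"
      have p: "\<And>i. i < K \<Longrightarrow> 0 < fst s i" using pos s by auto
      have "fst s j \<le> (\<Sum>i<K. fst s i)"
        using p j by (intro member_le_sum) (auto intro: less_imp_le)
      hence "ln (fst s j) \<le> ln (\<Sum>i<K. fst s i)" using p[OF j(1)] by (subst ln_le_cancel_iff) auto
      hence "- c * snd s \<le> ln (\<Sum>i<K. fst s i) - ln (fst s j) - c * snd s" by linarith
      hence "- c * snd s \<le> Psi \<gamma> K j s" unfolding Psi_def c_def .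
      thus "(- c * snd s) * pmf R s \<le> Psi \<gamma> K j s * pmf R s" by (intro mult_right_mono) auto
    qed
    also have "(\<Sum>s\<in>A. (- c * snd s) * pmf R s) = - c * E"
      unfolding Edef by (simp add: sum_distrib_left mult.assoc)
    finally show ?thesis .
  qed
  have h: "- (\<gamma> / real K + 3 * \<gamma>^2 / (2 * real K * (1 - \<gamma>))) * E
      \<le> ln (real K) - (\<gamma> / real K * G_max K x T + \<gamma>^2 / (2 * (real K)^2 * (1 - \<gamma>)) * (real K * EG_unif K x T))"
    using low ind sumeq unfolding c_def by linarith
  have e: "5/2 \<le> exp (1::real)" using exp_lower_Taylor_quadratic[of 1] by simp
  have L: "0 \<le> ln (real K)" using K2 by simp
  have "G_max K x T - E \<le> real K * ln (real K) / \<gamma> + \<gamma> * (exp 1 * G_max K x T - (4 - exp 1) * G_min K x T)"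
    by (rule final_alg[OF _ g0 g1 L h]) (use K2 assms(6,7) m0 mG e E_def in auto)
  thus ?thesis unfolding E_def .
qed

end
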